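(* Let $X$ be a real reflexive Banach space and $T:X\rightrightarrows X^{\ast}$ maximally monotone. Then for every $h\in\mathcal{H}(T)$, $\epsilon\ge0$ and $x\in X$, $\breve{T}_h(\epsilon,x)\subset T^{\mathrm{BE}}(\epsilon,x)$; in particular $\breve{T}_{\mathcal{F}_T}(\epsilon,x)\subset T^{\mathrm{BE}}(\epsilon,x)$.
   Context: $X^{\ast}$ is the dual of $X$ with pairing $\langle\cdot,\cdot\rangle$. The dual of $X\times X^{\ast}$ is identified with $X^{\ast}\times X$ via $\langle (x,x^{\ast}),(y^{\ast},y)\rangle=\langle x,y^{\ast}\rangle+\langle y,x^{\ast}\rangle$. $\mathcal{H}(T)$ is the family of lower semicontinuous convex $h:X\times X^{\ast}\to\mathbb{R}\cup\{+\infty\}$ with $h(x,x^{\ast})\ge\langle x,x^{\ast}\rangle$ everywhere and equality whenever $x^{\ast}\in T(x)$. For $\eta\ge0$, $\partial_\eta h(z)$ is the set of $(y^{\ast},y)\in X^{\ast}\times X$ with $h(w,w^{\ast})\ge h(z)+\langle (w,w^{\ast})-z,(y^{\ast},y)\rangle-\eta$ for all $(w,w^{\ast})$ when $h(z)<\infty$, and $\emptyset$ otherwise. $\breve{T}_h(\epsilon,x):=\{x^{\ast}:(x^{\ast},x)\in\partial_{2\epsilon}h(x,x^{\ast})\}$. The Fitzpatrick function is $\mathcal{F}_T(x,x^{\ast})=\sup\{\langle y,x^{\ast}\rangle+\langle x-y,y^{\ast}\rangle:(y,y^{\ast})\in\mathrm{gph}(T)\}$ (it belongs to $\mathcal{H}(T)$).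 $T^{\mathrm{BE}}(\epsilon,x):=\{x^{\ast}: \langle y-x,y^{\ast}-x^{\ast}\rangle\ge-\epsilon\ \forall (y,y^{\ast})\in\mathrm{gph}(T)\}$. *)

theory Defs
  imports "HOL-Analysis.Analysis" "HOL-Library.Extended_Real"
begin

text \<open>X is modelled as a real Banach space 'a::banach; its dual X* is the space of
 bounded linear functionals 'a \<Rightarrow>L real with the norm topology. The pairing
 of x and x* is blinfun_apply x* x.\<close>

definition pair :: "'a::real_normed_vector \<Rightarrow> ('a \<Rightarrow>\<^sub>L real) \<Rightarrow> real" where
  "pair x xs = blinfun_apply xs x"

definition reflexive_space :: "'a::real_normed_vector itself \<Rightarrow> bool" where
  "reflexive_space TYPE('a) \<longleftrightarrow>
     (\<forall>\<phi> :: ('a \<Rightarrow>\<^sub>L real) \<Rightarrow>\<^sub>L real. \<exists>x::'a. \<forall>f. blinfun_apply \<phi> f = blinfun_apply f x)"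

definition graph :: "('a \<Rightarrow> 'b set) \<Rightarrow> ('a \<times> 'b) set" where
  "graph T = {(x, xs). xs \<in> T x}"

definition monotone_op :: "('a::real_normed_vector \<Rightarrow> ('a \<Rightarrow>\<^sub>L real) set) \<Rightarrow> bool" where
  "monotone_op T \<longleftrightarrow>
     (\<forall>x xs y ys. xs \<in> T x \<longrightarrow> ys \<in> T y \<longrightarrow> pair (x - y) (xs - ys) \<ge> 0)"

definition maximal_monotone :: "('a::real_normed_vector \<Rightarrow> ('a \<Rightarrow>\<^sub>L real) set) \<Rightarrow> bool" where
  "maximal_monotone T \<longleftrightarrow> monotone_op T \<and>
     (\<forall>S. monotone_op S \<and> graph T \<subseteq> graph S \<longrightarrow> graph S = graph T)"

definition econvex :: "('v::real_vector \<Rightarrow> ereal) \<Rightarrow> bool" where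
  "econvex h \<longleftrightarrow> (\<forall>z w t. 0 < t \<and> t < 1 \<longrightarrow>
       h ((1 - t) *\<^sub>R z + t *\<^sub>R w) \<le> ereal (1 - t) * h z + ereal t * h w)"

definition elsc :: "('v::topological_space \<Rightarrow> ereal) \<Rightarrow> bool" where
  "elsc h \<longleftrightarrow> (\<forall>z c. c < h z \<longrightarrow> (\<forall>\<^sub>F w in nhds z. c < h w))"

definition HT :: "('a::real_normed_vector \<Rightarrow> ('a \<Rightarrow>\<^sub>L real) set)
                 \<Rightarrow> ('a \<times> ('a \<Rightarrow>\<^sub>L real) \<Rightarrow> ereal) set" where
  "HT T = {h. (\<forall>z. h z \<noteq> -\<infinity>) \<and> econvex h \<and> elsc h \<and>
              (\<forall>x xs. h (x, xs) \<ge> ereal (pair x xs)) \<and>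
              (\<forall>x xs. xs \<in> T x \<longrightarrow> h (x, xs) = ereal (pair x xs))}"

text \<open>Pairing of X \<times> X* with its dual X* \<times> X.\<close>
definition ppair :: "'a::real_normed_vector \<times> ('a \<Rightarrow>\<^sub>L real) \<Rightarrow> ('a \<Rightarrow>\<^sub>L real) \<times> 'a \<Rightarrow> real" where
  "ppair z u = pair (fst z) (fst u) + pair (snd u) (snd z)"

definition esubdiff :: "real \<Rightarrow> ('a::real_normed_vector \<times> ('a \<Rightarrow>\<^sub>L real) \<Rightarrow> ereal)
                        \<Rightarrow> 'a \<times> ('a \<Rightarrow>\<^sub>L real) \<Rightarrow> (('a \<Rightarrow>\<^sub>L real) \<times> 'a) set" where
  "esubdiff \<eta> h z = (if h z < \<infinity> then
      {u. \<forall>w. h w \<ge> h z + ereal (ppair (w - z) u - \<eta>)} else {})"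

definition Tbreve :: "('a::real_normed_vector \<times> ('a \<Rightarrow>\<^sub>L real) \<Rightarrow> ereal)
                      \<Rightarrow> real \<Rightarrow> 'a \<Rightarrow> ('a \<Rightarrow>\<^sub>L real) set" where
  "Tbreve h \<epsilon> x = {xs. (xs, x) \<in> esubdiff (2 * \<epsilon>) h (x, xs)}"

definition Fitzpatrick :: "('a::real_normed_vector \<Rightarrow> ('a \<Rightarrow>\<^sub>L real) set)
                           \<Rightarrow> 'a \<times> ('a \<Rightarrow>\<^sub>L real) \<Rightarrow> ereal" where
  "Fitzpatrick T z = (SUP p \<in> graph T. ereal (pair (fst p) (snd z) + pair (fst z - fst p) (snd p)))"

definition TBE :: "('a::real_normed_vector \<Rightarrow> ('a \<Rightarrow>\<^sub>L real) set) \<Rightarrow> real \<Rightarrow> 'a \<Rightarrow> ('a \<Rightarrow>\<^sub>L real) set" where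
  "TBE T \<epsilon> x = {xs. \<forall>y ys. ys \<in> T y \<longrightarrow> pair (y - x) (ys - xs) \<ge> - \<epsilon>}"

end

theory Submission
  imports Defs
begin

lemma pair_simps:
  "pair (a + b) f = pair a f + pair b f"
  "pair (a - b) f = pair a f - pair b f"
  "pair (c *\<^sub>R a) f = c * pair a f"
  "pair a (f + g) = pair a f + pair a g"
  "pair a (f - g) = pair a f - pair a g"
  "pair a (c *\<^sub>R f) = c * pair a f"
  by (simp_all add: pair_def blinfun.add_right blinfun.diff_right blinfun.scaleR_right plus_blinfun.rep_eq minus_blinfun.rep_eq scaleR_blinfun.rep_eq)

lemma part1:
  fixes T :: "'a::real_normed_vector \<Rightarrow> ('a \<Rightarrow>\<^sub>L real) set"
  assumes h: "h \<in> HT T" and xs: "xs \<in> Tbreve h \<epsilon> x" and ys: "ys \<in> T y"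
  shows "pair (y - x) (ys - xs) \<ge> - \<epsilon>"
proof -
  have hni: "\<And>z. h z \<noteq> -\<infinity>" and cv: "econvex h"
    and ge: "\<And>x xs. h (x, xs) \<ge> ereal (pair x xs)"
    and eq: "h (y, ys) = ereal (pair y ys)" using h ys unfolding HT_def by auto
  from xs have fin: "h (x,xs) < \<infinity>" and sub: "\<And>w. h w \<ge> h (x,xs) + ereal (ppair (w - (x,xs)) (xs,x) - 2*\<epsilon>)"
    unfolding Tbreve_def esubdiff_def by (auto split: if_splits)
  obtain hz where hz: "h (x,xs) = ereal hz" using fin hni[of "(x,xs)"] by (cases "h (x,xs)") auto
  define p11 where "p11 = pair x xs"
  define p12 where "p12 = pair x ys"
  define p21 where "p21 = pair y xs"
  define p22 where "p22 = pair y ys"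
  define a where "a = hz - p11"
  define d where "d = p22 - p12 - p21 + p11"
  have a0: "a \<ge> 0" using ge[of x xs] hz by (simp add: a_def p11_def)
  have "ereal p22 \<ge> ereal hz + ereal (ppair ((y,ys) - (x,xs)) (xs,x) - 2*\<epsilon>)"
    using sub[of "(y,ys)"] eq hz by (simp add: p22_def)
  hence s: "p22 \<ge> hz + (p21 - p11 + p12 - p11) - 2*\<epsilon>"
    by (simp add: ppair_def pair_simps p11_def p12_def p21_def p22_def)
  have c: "a + d \<ge> 0"
  proof (rule ccontr)
    assume n: "\<not> 0 \<le> a + d"
    hence dn: "d < 0" using a0 by simp
    define e where "e = (a+d)/(2*d)"
    have e0: "0 < e" unfolding e_def using n dn by (simp add: divide_neg_neg)
    have e1: "e < 1" unfolding e_def using n dn a0 by (simp add: divide_less_eq)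
    define t where "t = 1 - e"
    have t0: "0 < t" "t < 1" using e0 e1 by (auto simp: t_def)
    have "h ((1 - t) *\<^sub>R (x,xs) + t *\<^sub>R (y,ys)) \<le> ereal (1 - t) * h (x,xs) + ereal t * h (y,ys)"
      using cv t0 unfolding econvex_def by blast
    moreover have "h ((1 - t) *\<^sub>R (x,xs) + t *\<^sub>R (y,ys)) \<ge>
        ereal (pair ((1-t) *\<^sub>R x + t *\<^sub>R y) ((1-t) *\<^sub>R xs + t *\<^sub>R ys))"
      using ge by simp
    ultimately have "pair ((1-t) *\<^sub>R x + t *\<^sub>R y) ((1-t) *\<^sub>R xs + t *\<^sub>R ys) \<le> (1-t)*hz + t*p22"
      using hz eq by (simp add: p22_def) (meson ereal_less_eq(3) order_trans)
    hence ineq: "(1-t)*(1-t)*p11 + (1-t)*t*p12 + t*(1-t)*p21 + t*t*p22 \<le> (1-t)*hz + t*p22"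
      by (simp add: pair_simps p11_def p12_def p21_def p22_def algebra_simps)
    have id: "(1-t)*hz + t*p22 - ((1-t)*(1-t)*p11 + (1-t)*t*p12 + t*(1-t)*p21 + t*t*p22) = (1-t)*(a + t*d)"
      by (simp add: a_def d_def algebra_simps)
    have "a + t*d = (a+d)/2" using dn by (simp add: t_def e_def field_simps)
    hence "(1-t)*(a + t*d) < 0" using t0 n by (simp add: mult_pos_neg)
    with id ineq show False by linarith
  qed
  have "d \<ge> a - 2*\<epsilon>" using s by (simp add: a_def d_def)
  hence "d \<ge> -\<epsilon>" using c by linarith
  thus ?thesis by (simp add: d_def pair_simps p11_def p12_def p21_def p22_def)
qed

lemma part2:
  fixes T :: "'a::real_normed_vector \<Rightarrow> ('a \<Rightarrow>\<^sub>L real) set"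
  assumes mon: "monotone_op T" and xs: "xs \<in> Tbreve (Fitzpatrick T) \<epsilon> x" and ys: "ys \<in> T y"
  shows "pair (y - x) (ys - xs) \<ge> - \<epsilon>"
proof -
  let ?F = "Fitzpatrick T"
  from xs have sub: "\<And>w. ?F w \<ge> ?F (x,xs) + ereal (ppair (w - (x,xs)) (xs,x) - 2*\<epsilon>)"
    unfolding Tbreve_def esubdiff_def by (auto split: if_splits)
  have gy: "(y,ys) \<in> graph T" using ys by (simp add: graph_def)
  have up: "?F (y,ys) \<le> ereal (pair y ys)"
    unfolding Fitzpatrick_def
  proof (rule SUP_least)
    fix p assume "p \<in> graph T"
    hence "snd p \<in> T (fst p)" by (auto simp: graph_def)
    hence "pair (y - fst p) (ys - snd p) \<ge> 0" using mon ys unfolding monotone_op_def by blast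
    thus "ereal (pair (fst p) (snd (y,ys)) + pair (fst (y,ys) - fst p) (snd p)) \<le> ereal (pair y ys)"
      by (simp add: pair_simps)
  qed
  have lo: "?F (x,xs) \<ge> ereal (pair y xs + pair (x - y) ys)"
    unfolding Fitzpatrick_def using gy by (force intro: SUP_upper2)
  have "ereal (pair y ys) \<ge> ereal (pair y xs + pair (x - y) ys) + ereal (ppair ((y,ys) - (x,xs)) (xs,x) - 2*\<epsilon>)"
    using sub[of "(y,ys)"] up lo by (meson add_right_mono order_trans)
  hence "pair y ys \<ge> pair y xs + pair (x - y) ys + (ppair ((y,ys) - (x,xs)) (xs,x) - 2*\<epsilon>)"
    by simp
  thus ?thesis by (simp add: ppair_def pair_simps)
qed

theorem corollary3p3:
  fixes T :: "'a::banach \<Rightarrow> ('a \<Rightarrow>\<^sub>L real) set"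
  assumes "reflexive_space TYPE('a)"
    and "maximal_monotone T"
  shows "(\<forall>h \<in> HT T. \<forall>\<epsilon> \<ge> 0. \<forall>x. Tbreve h \<epsilon> x \<subseteq> TBE T \<epsilon> x)
         \<and> (\<forall>\<epsilon> \<ge> 0. \<forall>x. Tbreve (Fitzpatrick T) \<epsilon> x \<subseteq> TBE T \<epsilon> x)"
  using part1[of _ T] part2[of T] assms(2) unfolding maximal_monotone_def TBE_def by blast

end
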